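(* Let $X$ be a compact metric space, $(f_n)_{n\ge1}$ a sequence of continuous maps $X\to X$, and $(k_n)_{n\ge1}$ a strictly increasing sequence of positive integers. Define $\hat f_1=f_{k_1}\circ\cdots\circ f_1$ and $\hat f_n=f_{k_n}\circ\cdots\circ f_{k_{n-1}+1}$ for $n\ge2$, and let $\gamma\colon\mathbb{N}\to\mathbb{N}$, $\gamma(n)=k_n$. If $p,q\in\mathbb{N}^*$ and $\overline{\gamma}(q)=p$, then $\hat f_1^q=f_1^p$. In particular $E(X,\hat f_{1,\infty})\subseteq E(X,f_{1,\infty})$.
   Context: $\mathbb{N}=\{1,2,3,\dots\}$, $\beta(\mathbb{N})$ the ultrafilters on $\mathbb{N}$ (principal ones identified with elements of $\mathbb{N}$), $\mathbb{N}^*$ the free ones. For $p\in\mathbb{N}^*$, $p\text{-}\lim_n x_n$ is the unique $y$ with $\{n:x_n\in V\}\in p$ for all neighbourhoods $V$ of $y$. For a sequence $(g_n)$ of continuous self-maps of $X$: $g_1^n=g_n\circ\cdots\circ g_1$, $g_1^p(x)=p\text{-}\lim_n g_1^n(x)$ for $p\in\mathbb{N}^*$, and $E(X,g_{1,\infty})$ is the closure of $\{g_1^n:n\in\mathbb{N}\}$ in $X^X$ (pointwise topology). $\overline{\gamma}$ is the Stone extension of $\gamma$: $\overline{\gamma}(q)=\{A\subseteq\mathbb{N}:\gamma^{-1}(A)\in q\}$. *)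

theory Defs
  imports "HOL-Analysis.Analysis"
begin

definition is_ultrafilter :: "'a filter \<Rightarrow> bool" where
  "is_ultrafilter F \<longleftrightarrow> F \<noteq> bot \<and> (\<forall>A. eventually (\<lambda>x. x \<in> A) F \<or> eventually (\<lambda>x. x \<notin> A) F)"

definition free_ultrafilter :: "nat filter \<Rightarrow> bool" where
  "free_ultrafilter p \<longleftrightarrow> is_ultrafilter p \<and> (\<forall>n. \<not> eventually (\<lambda>m. m = n) p)"

text \<open>Stone extension of gamma: gamma-bar(q) = {A. gamma -` A \<in> q}, i.e. filtermap.\<close>
definition stone_ext :: "(nat \<Rightarrow> nat) \<Rightarrow> nat filter \<Rightarrow> nat filter" where
  "stone_ext \<gamma> q = filtermap \<gamma> q"

fun comp_upto :: "(nat \<Rightarrow> 'a \<Rightarrow> 'a) \<Rightarrow> nat \<Rightarrow> 'a \<Rightarrow> 'a" where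
  "comp_upto g 0 = id"
| "comp_upto g (Suc n) = g (Suc n) \<circ> comp_upto g n"

text \<open>block_comp f a b = f_b o ... o f_(a+1)  (identity if b \<le> a).\<close>
fun block_comp :: "(nat \<Rightarrow> 'a \<Rightarrow> 'a) \<Rightarrow> nat \<Rightarrow> nat \<Rightarrow> 'a \<Rightarrow> 'a" where
  "block_comp f a 0 = id"
| "block_comp f a (Suc b) = (if Suc b \<le> a then id else f (Suc b) \<circ> block_comp f a b)"

definition hat_seq :: "(nat \<Rightarrow> 'a \<Rightarrow> 'a) \<Rightarrow> (nat \<Rightarrow> nat) \<Rightarrow> nat \<Rightarrow> 'a \<Rightarrow> 'a" where
  "hat_seq f k n = (if n = 1 then block_comp f 0 (k 1) else block_comp f (k (n - 1)) (k n))"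

definition ult_iter :: "(nat \<Rightarrow> 'a::t2_space \<Rightarrow> 'a) \<Rightarrow> nat filter \<Rightarrow> 'a \<Rightarrow> 'a" where
  "ult_iter g p x = Lim p (\<lambda>n. comp_upto g n x)"

text \<open>Enveloping semigroup E(X, g_{1,\<infinity>}): closure of {g_1^n : n \<ge> 1} in X^X with the
pointwise (product) topology; maps X \<rightarrow> X are represented as extensional functions.\<close>
definition env_semigroup :: "'a::topological_space set \<Rightarrow> (nat \<Rightarrow> 'a \<Rightarrow> 'a) \<Rightarrow> ('a \<Rightarrow> 'a) set" where
  "env_semigroup X g = (product_topology (\<lambda>_. subtopology euclidean X) X)
      closure_of {restrict (comp_upto g n) X | n. n \<ge> 1}"

end

theory Submission
  imports Defs
begin

lemma block_comp_comp:
  "a \<le> b \<Longrightarrow> block_comp f a b \<circ> comp_upto f a = comp_upto f b"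
proof (induction b)
  case 0 then show ?case by simp
next
  case (Suc b)
  show ?case
  proof (cases "Suc b \<le> a")
    case True
    then have "a = Suc b" using Suc.prems by simp
    then show ?thesis by simp
  next
    case False
    then have "a \<le> b" by simp
    then have "block_comp f a b \<circ> comp_upto f a = comp_upto f b" by (rule Suc.IH)
    then have "\<And>y. block_comp f a b (comp_upto f a y) = comp_upto f b y"
      by (metis comp_apply)
    then show ?thesis using False by (simp add: fun_eq_iff)
  qed
qed

lemma hat_comp:
  assumes mono: "\<And>m n. 1 \<le> m \<Longrightarrow> m < n \<Longrightarrow> k m < k n"
  shows "n \<ge> 1 \<Longrightarrow> comp_upto (hat_seq f k) n = comp_upto f (k n)"
proof (induction n)
  case 0 then show ?case by simp
next
  case (Suc n)
  show ?case
  proof (cases "n = 0")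
    case True
    have "block_comp f 0 (k 1) = comp_upto f (k 1)"
      using block_comp_comp[of 0 "k 1" f] by simp
    then show ?thesis using True by (simp add: hat_seq_def)
  next
    case False
    then have IH: "comp_upto (hat_seq f k) n = comp_upto f (k n)" using Suc.IH by simp
    have le: "k n \<le> k (Suc n)" using mono[of n "Suc n"] False by simp
    have "hat_seq f k (Suc n) = block_comp f (k n) (k (Suc n))"
      using False by (simp add: hat_seq_def)
    then show ?thesis using IH block_comp_comp[OF le, of f] by simp
  qed
qed

theorem theorem2p8:
  fixes X :: "'a::metric_space set"
    and f :: "nat \<Rightarrow> 'a \<Rightarrow> 'a"
    and k :: "nat \<Rightarrow> nat"
  assumes "compact X"
    and "\<And>n. n \<ge> 1 \<Longrightarrow> continuous_on X (f n)"
    and "\<And>n. n \<ge> 1 \<Longrightarrow> f n ` X \<subseteq> X"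
    and "k 1 \<ge> 1"
    and "\<And>m n. 1 \<le> m \<Longrightarrow> m < n \<Longrightarrow> k m < k n"
  shows "(\<forall>p q. free_ultrafilter p \<and> free_ultrafilter q \<and> stone_ext k q = p \<longrightarrow>
            (\<forall>x\<in>X. ult_iter (hat_seq f k) q x = ult_iter f p x))
         \<and> env_semigroup X (hat_seq f k) \<subseteq> env_semigroup X f"
proof
  note hc = hat_comp[OF assms(5)]
  show "\<forall>p q. free_ultrafilter p \<and> free_ultrafilter q \<and> stone_ext k q = p \<longrightarrow>
            (\<forall>x\<in>X. ult_iter (hat_seq f k) q x = ult_iter f p x)"
  proof (intro allI impI ballI)
    fix p q x
    assume H: "free_ultrafilter p \<and> free_ultrafilter q \<and> stone_ext k q = p"
    then have uq: "is_ultrafilter q" and nq: "\<not> eventually (\<lambda>m. m = 0) q"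
      unfolding free_ultrafilter_def by auto
    have ev: "eventually (\<lambda>m. m \<noteq> 0) q"
    proof -
      have "eventually (\<lambda>m. m \<in> {0::nat}) q \<or> eventually (\<lambda>m. m \<notin> {0::nat}) q"
        using uq unfolding is_ultrafilter_def by blast
      then show ?thesis using nq by simp
    qed
    have ev2: "eventually (\<lambda>n. comp_upto f (k n) x = comp_upto (hat_seq f k) n x) q"
      using ev by (rule eventually_mono) (simp add: hc)
    have eqv: "\<And>l. ((\<lambda>n. comp_upto (hat_seq f k) n x) \<longlongrightarrow> l) q
             \<longleftrightarrow> ((\<lambda>m. comp_upto f m x) \<longlongrightarrow> l) p"
    proof -
      fix l
      have "((\<lambda>n. comp_upto (hat_seq f k) n x) \<longlongrightarrow> l) q
            \<longleftrightarrow> ((\<lambda>n. comp_upto f (k n) x) \<longlongrightarrow> l) q"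
        using tendsto_cong[OF ev2] by simp
      also have "\<dots> \<longleftrightarrow> ((\<lambda>m. comp_upto f m x) \<longlongrightarrow> l) (filtermap k q)"
        by (simp add: filterlim_filtermap)
      finally show "?thesis l" using H by (simp add: stone_ext_def)
    qed
    show "ult_iter (hat_seq f k) q x = ult_iter f p x"
      unfolding ult_iter_def by (simp only: Topological_Spaces.t2_space_class.Lim_def eqv)
  qed
next
  have kpos: "n \<ge> 1 \<Longrightarrow> k n \<ge> 1" for n
    using assms(4) assms(5)[of 1 n] by (cases "n = 1") auto
  have "{restrict (comp_upto (hat_seq f k) n) X | n. n \<ge> 1}
        \<subseteq> {restrict (comp_upto f n) X | n. n \<ge> 1}"
  proof
    fix g assume "g \<in> {restrict (comp_upto (hat_seq f k) n) X | n. n \<ge> 1}"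
    then obtain n where n: "n \<ge> 1" "g = restrict (comp_upto (hat_seq f k) n) X" by blast
    then have "g = restrict (comp_upto f (k n)) X" using hat_comp[of k n f, OF assms(5) n(1)] by simp
    then show "g \<in> {restrict (comp_upto f n) X | n. n \<ge> 1}" using kpos[OF n(1)] by blast
  qed
  then show "env_semigroup X (hat_seq f k) \<subseteq> env_semigroup X f"
    unfolding env_semigroup_def by (rule closure_of_mono)
qed

end
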